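(* Let $x$ be fixed, let $\pi_{\pm|x}\ge0$ with $\pi_{+|x}+\pi_{-|x}=1$, and let $\rho_{\pm|x}=|\psi_{\pm|x}\rangle\langle\psi_{\pm|x}|=\tfrac12(I+\mathbf s_{\pm|x}\cdot\boldsymbol\sigma)$ be pure qubit states. Define the fidelity-based discriminability of the ensemble $\{(\pi_{+|x},\rho_{+|x}),(\pi_{-|x},\rho_{-|x})\}$ by $$D_x=\eta_1^2+\eta_2^2+2\eta_1\eta_2\sqrt{1-|\gamma|^2}+|\gamma|^2(\eta_1\eta_2-\eta_{\min}^2),$$ where $\eta_1=\pi_{+|x}$, $\eta_2=\pi_{-|x}$, $\eta_{\min}=\min\{\eta_1,\eta_2\}$ and $\gamma=\langle\psi_{+|x}|\psi_{-|x}\rangle$. With the SWAP-test pass probability $p(\mathsf{pass}|\rho,\sigma)=\tfrac12(1+\mathrm{Tr}(\rho\sigma))$, let $p_{\mathrm{pur}}^{\pm|x}=p(\mathsf{pass}|\rho_{\pm|x},\rho_{\pm|x})$, $p_{\mathrm{ov}}^{x}=p(\mathsf{pass}|\rho_{+|x},\rho_{-|x})$, and let $\widetilde R_x\ge0$ be given by $$\widetilde R_x^2=2\Big[\pi_{+|x}^2(2p_{\mathrm{pur}}^{+|x}-1)+\pi_{-|x}^2(2p_{\mathrm{pur}}^{-|x}-1)-2\pi_{+|x}\pi_{-|x}(2p_{\mathrm{ov}}^{x}-1)\Big]-(\pi_{+|x}-\pi_{-|x})^2 .$$ Then $\widetilde R_x\le 2D_x-1$.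
   Context: $\boldsymbol\sigma$ denotes the vector of Pauli matrices. In the paper, $\pi_{a|x}=p(a|x)$ are Alice's outcome probabilities and $\rho_{a|x}$ Bob's conditional preparations in a Bell experiment. *)

theory Defs
  imports "HOL-Analysis.Analysis"
begin

definition braket :: "complex^2 \<Rightarrow> complex^2 \<Rightarrow> complex" where
  "braket \<phi> \<psi> = (\<Sum>i\<in>UNIV. cnj (\<phi>$i) * \<psi>$i)"

definition ket_proj :: "complex^2 \<Rightarrow> complex^2^2" where
  "ket_proj \<psi> = (\<chi> i j. \<psi>$i * cnj (\<psi>$j))"

definition mtrace :: "complex^'n^'n \<Rightarrow> complex" where
  "mtrace A = (\<Sum>i\<in>UNIV. A$i$i)"

text \<open>SWAP-test pass probability (1 + Tr(rho sigma))/2; the trace is real for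
  Hermitian rho, sigma, so we take its real part.\<close>
definition swap_pass :: "complex^2^2 \<Rightarrow> complex^2^2 \<Rightarrow> real" where
  "swap_pass \<rho> \<sigma> = (1 + Re (mtrace (\<rho> ** \<sigma>))) / 2"

definition fid_discr :: "real \<Rightarrow> real \<Rightarrow> complex^2 \<Rightarrow> complex^2 \<Rightarrow> real" where
  "fid_discr \<eta>1 \<eta>2 \<psi>1 \<psi>2 =
     (let g = cmod (braket \<psi>1 \<psi>2); \<eta>m = min \<eta>1 \<eta>2 in
      \<eta>1^2 + \<eta>2^2 + 2 * \<eta>1 * \<eta>2 * sqrt (1 - g^2) + g^2 * (\<eta>1 * \<eta>2 - \<eta>m^2))"

end

theory Submission
  imports Defs
begin

lemma mcnj: "z * cnj z = (complex_of_real (cmod z))^2"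
  by (metis complex_norm_square of_real_power)

lemma trace_kp: "mtrace (ket_proj p ** ket_proj q) = braket q p * braket p q"
  unfolding mtrace_def matrix_matrix_mult_def ket_proj_def braket_def
  by (simp add: sum_2 algebra_simps)

lemma braket_cnj: "braket q p = cnj (braket p q)"
  unfolding braket_def by (simp add: sum_2)

lemma Re_trace_kp: "Re (mtrace (ket_proj p ** ket_proj q)) = (cmod (braket p q))^2"
proof -
  have "braket q p * braket p q = of_real ((cmod (braket p q))^2)"
    unfolding braket_cnj[of q p] by (simp add: mcnj mult.commute)
  then show ?thesis unfolding trace_kp by simp
qed

lemma norm2_sq: "(norm (p::complex^2))^2 = (cmod (p$1))^2 + (cmod (p$2))^2"
  unfolding norm_vec_def L2_set_def sum_2 by simp

lemma braket_self: "braket p p = of_real ((norm p)^2)"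
  unfolding norm2_sq braket_def sum_2
  by (simp add: mcnj[symmetric] mult.commute)

lemma braket_cs: "cmod (braket p q) \<le> norm p * norm q"
proof -
  let ?x = "cmod (p$1)" and ?u = "cmod (p$2)" and ?y = "cmod (q$1)" and ?v = "cmod (q$2)"
  have "cmod (braket p q) \<le> ?x * ?y + ?u * ?v"
    unfolding braket_def sum_2
    by (metis (no_types, lifting) complex_mod_cnj norm_mult norm_triangle_ineq)
  also have "\<dots> \<le> sqrt ((?x^2 + ?u^2) * (?y^2 + ?v^2))"
  proof (rule real_le_rsqrt)
    have "0 \<le> (?x * ?v - ?u * ?y)^2" by simp
    then show "(?x * ?y + ?u * ?v)^2 \<le> (?x^2 + ?u^2) * (?y^2 + ?v^2)"
      by (simp add: algebra_simps power2_eq_square)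
  qed
  also have "\<dots> = norm p * norm q"
    unfolding real_sqrt_mult norm2_sq[symmetric] by simp
  finally show ?thesis .
qed

lemma realpart:
  fixes a b z R :: real
  assumes "0 \<le> a" "a \<le> b" "a + b = 1" "0 \<le> z" "z \<le> 1" "0 \<le> R"
    and "R^2 = 1 - 4*a*b*(1 - z^2)"
  shows "R \<le> 2*(a^2+b^2+2*a*b*z + (1 - z^2) * (a*b - a^2)) - 1"
proof -
  define E where "E = 2*(a^2+b^2+2*a*b*z + (1 - z^2) * (a*b - a^2)) - 1"
  have b: "b = 1 - a" using assms by simp
  have a2: "a \<le> 1/2" using assms by simp
  have X: "E = 1 - 2*a*(1-z)*((b-a)*(1-z)+2*a)" unfolding E_def b by (simp add: algebra_simps power2_eq_square)
  have h1: "a*(1-z) \<le> a*1" using assms by (intro mult_left_mono) auto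
  have h2: "(b-a)*(1-z) \<le> (b-a)*1" using assms by (intro mult_left_mono) auto
  have "2*a*(1-z)*((b-a)*(1-z)+2*a) \<le> 2*a*1*((b-a)*1+2*a)"
    apply (rule mult_mono) using assms h1 h2 by auto
  then have E0: "E \<ge> 0" using X assms by simp
  have id: "E^2 - R^2 = 2*a*(1-z)*((b-a)*z*(4 - (1-(b-a))*(1-z)*(2-(b-a)*z)))"
    unfolding E_def assms(7) b by (simp add: algebra_simps power2_eq_square)
  have c: "0 \<le> b - a" "b - a \<le> 1" using assms by auto
  have "(1-(b-a))*(1-z) \<le> 1" using c assms by (simp add: mult_le_one)
  moreover have "0 \<le> (1-(b-a))*(1-z)" using c assms by simp
  moreover have "(b-a)*z \<le> 1" using c assms by (simp add: mult_le_one)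
  moreover have "(2-(b-a)*z) \<le> 2" using c assms by simp
  ultimately have "0 \<le> (1-(b-a))*(1-z)" "(1-(b-a))*(1-z) \<le> 1" "(2-(b-a)*z) \<le> 2" "0 \<le> (2-(b-a)*z)" by auto
  then have "(1-(b-a))*(1-z)*(2-(b-a)*z) \<le> 1 * 2"
    by (intro mult_mono) auto
  then have "0 \<le> 4 - (1-(b-a))*(1-z)*(2-(b-a)*z)" by simp
  moreover have "0 \<le> 2*a*(1-z)" using assms by simp
  moreover have "0 \<le> (b-a)*z" using assms c by simp
  ultimately have "0 \<le> 2*a*(1-z)*((b-a)*z*(4 - (1-(b-a))*(1-z)*(2-(b-a)*z)))"
    using assms c by (intro mult_nonneg_nonneg) auto
  then have "R^2 \<le> E^2" using id by linarith
  then have "R \<le> E" using E0 by (rule power2_le_imp_le)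
  then show ?thesis unfolding E_def .
qed

theorem lemma2:
  fixes \<pi>p \<pi>m R :: real and \<psi>p \<psi>m :: "complex^2"
  assumes "\<pi>p \<ge> 0" and "\<pi>m \<ge> 0" and "\<pi>p + \<pi>m = 1"
    and "norm \<psi>p = 1" and "norm \<psi>m = 1"
    and "R \<ge> 0"
    and "R^2 = 2 * (\<pi>p^2 * (2 * swap_pass (ket_proj \<psi>p) (ket_proj \<psi>p) - 1)
                 + \<pi>m^2 * (2 * swap_pass (ket_proj \<psi>m) (ket_proj \<psi>m) - 1)
                 - 2 * \<pi>p * \<pi>m * (2 * swap_pass (ket_proj \<psi>p) (ket_proj \<psi>m) - 1))
               - (\<pi>p - \<pi>m)^2"
  shows "R \<le> 2 * fid_discr \<pi>p \<pi>m \<psi>p \<psi>m - 1"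
proof -
  define g where "g = cmod (braket \<psi>p \<psi>m)"
  define z where "z = sqrt (1 - g^2)"
  have g0: "0 \<le> g" unfolding g_def by simp
  have g1: "g \<le> 1" unfolding g_def using braket_cs[of \<psi>p \<psi>m] assms by simp
  have g2: "g^2 \<le> 1" using g0 g1 by (simp add: power_le_one)
  have z0: "0 \<le> z" and z1: "z \<le> 1" unfolding z_def using g2 g0 by auto
  have zz: "z^2 = 1 - g^2" unfolding z_def using g2 by simp
  have sp: "2 * swap_pass (ket_proj \<psi>) (ket_proj \<psi>) - 1 = 1" if "norm \<psi> = 1" for \<psi>
    unfolding swap_pass_def Re_trace_kp braket_self that by simp
  have so: "2 * swap_pass (ket_proj \<psi>p) (ket_proj \<psi>m) - 1 = g^2"
    unfolding swap_pass_def Re_trace_kp g_def by (simp add: field_simps)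
  have "R^2 = 2 * (\<pi>p^2 * 1 + \<pi>m^2 * 1 - 2 * \<pi>p * \<pi>m * g^2) - (\<pi>p - \<pi>m)^2"
    using assms(7) unfolding sp[OF assms(4)] sp[OF assms(5)] so .
  also have "\<dots> = (\<pi>p + \<pi>m)^2 - 4 * \<pi>p * \<pi>m * g^2"
    by (simp add: algebra_simps power2_eq_square)
  also have "\<dots> = 1 - 4 * \<pi>p * \<pi>m * (1 - z^2)" unfolding assms(3) zz by simp
  finally have R2: "R^2 = 1 - 4 * \<pi>p * \<pi>m * (1 - z^2)" .
  have D: "fid_discr \<pi>p \<pi>m \<psi>p \<psi>m =
     \<pi>p^2 + \<pi>m^2 + 2 * \<pi>p * \<pi>m * z + (1 - z^2) * (\<pi>p * \<pi>m - (min \<pi>p \<pi>m)^2)"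
    unfolding fid_discr_def Let_def g_def[symmetric] z_def[symmetric] zz by simp
  show ?thesis
  proof (cases "\<pi>p \<le> \<pi>m")
    case True
    show ?thesis unfolding D using True
      realpart[OF assms(1) True assms(3) z0 z1 assms(6) R2] by simp
  next
    case False
    have R2': "R^2 = 1 - 4 * \<pi>m * \<pi>p * (1 - z^2)" using R2 by (simp add: algebra_simps)
    have "\<pi>m \<le> \<pi>p" "\<pi>m + \<pi>p = 1" using False assms by auto
    from realpart[OF assms(2) this z0 z1 assms(6) R2']
    show ?thesis unfolding D using False by (simp add: algebra_simps)
  qed
qed

end
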